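(* Let $k$ be a field, $R$ a standard graded $k$-algebra and $a\in R_1$. If $M$ is a finitely generated graded $R$-module such that there is an isomorphism of graded $R$-modules $(M/aM)(-1)\cong(0:_M a)$, then $$H_M(t)=(1+t)H_{M/aM}(t).$$ In particular, if $a,b\in R_1$ form an exact pair of zero divisors, then $H_R(t)=(1+t)H_{R/aR}(t)$, and hence $H_R(-1)=0$.
   Context: A standard graded $k$-algebra is a commutative graded ring $R=\bigoplus_{n\ge0}R_n$ with $R_0=k$, finitely generated as a $k$-algebra by $R_1$. For a finitely generated graded $R$-module $M=\bigoplus_n M_n$, its Hilbert series is $H_M(t)=\sum_n\operatorname{rank}_k(M_n)t^n$; $M(-1)$ denotes the shift with $M(-1)_n=M_{n-1}$. Elements $a,b\in R$ form an exact pair of zero divisors if $a,b$ are nonzero non-units with $(0:_R a)=bR$ and $(0:_R b)=aR$. *)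

theory Defs
  imports Main "HOL-Computational_Algebra.Formal_Laurent_Series" "HOL-Computational_Algebra.Polynomial_FPS"
begin

inductive_set alg_gen :: "('k \<Rightarrow> 'r::comm_ring_1) \<Rightarrow> 'r set \<Rightarrow> 'r set"
  for iota :: "'k \<Rightarrow> 'r" and S :: "'r set" where
  const: "iota c \<in> alg_gen iota S"
| gen: "s \<in> S \<Longrightarrow> s \<in> alg_gen iota S"
| add: "x \<in> alg_gen iota S \<Longrightarrow> y \<in> alg_gen iota S \<Longrightarrow> x + y \<in> alg_gen iota S"
| mult: "x \<in> alg_gen iota S \<Longrightarrow> y \<in> alg_gen iota S \<Longrightarrow> x * y \<in> alg_gen iota S"

definition direct_sum_decomp :: "('i \<Rightarrow> 'b::ab_group_add set) \<Rightarrow> bool" where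
  "direct_sum_decomp D \<longleftrightarrow>
     (\<forall>n. 0 \<in> D n \<and> (\<forall>x\<in>D n. \<forall>y\<in>D n. x + y \<in> D n \<and> - x \<in> D n)) \<and>
     (\<forall>x. \<exists>!c. finite {n. c n \<noteq> 0} \<and> (\<forall>n. c n \<in> D n) \<and> x = sum c {n. c n \<noteq> 0})"

(* R (the whole type 'r) is a standard graded k-algebra with structure map iota : k -> R
   and homogeneous components G n = R_n. *)
definition standard_graded_algebra ::
    "('k::field \<Rightarrow> 'r::comm_ring_1) \<Rightarrow> (nat \<Rightarrow> 'r set) \<Rightarrow> bool" where
  "standard_graded_algebra iota G \<longleftrightarrow>
     iota 1 = 1 \<and> (\<forall>x y. iota (x + y) = iota x + iota y) \<and> (\<forall>x y. iota (x * y) = iota x * iota y) \<and>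
     inj iota \<and>
     direct_sum_decomp G \<and>
     (\<forall>n c x. x \<in> G n \<longrightarrow> iota c * x \<in> G n) \<and>
     (\<forall>m n x y. x \<in> G m \<longrightarrow> y \<in> G n \<longrightarrow> x * y \<in> G (m + n)) \<and>
     G 0 = range iota \<and>
     (\<exists>B. finite B \<and> B \<subseteq> G 1 \<and> alg_gen iota B = UNIV)"

(* M (the whole type 'm) is a graded R-module via smul, with components MG n = M_n, n \<in> \<int>. *)
definition graded_module ::
    "(nat \<Rightarrow> 'r::comm_ring_1 set) \<Rightarrow> ('r \<Rightarrow> 'm::ab_group_add \<Rightarrow> 'm) \<Rightarrow> (int \<Rightarrow> 'm set) \<Rightarrow> bool" where
  "graded_module G smul MG \<longleftrightarrow>
     module smul \<and> direct_sum_decomp MG \<and>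
     (\<forall>i n r x. r \<in> G i \<longrightarrow> x \<in> MG n \<longrightarrow> smul r x \<in> MG (int i + n))"

definition fin_gen_module :: "('r::comm_ring_1 \<Rightarrow> 'm::ab_group_add \<Rightarrow> 'm) \<Rightarrow> bool" where
  "fin_gen_module smul \<longleftrightarrow> (\<exists>S. finite S \<and> module.span smul S = UNIV)"

definition R_linear :: "('r::comm_ring_1 \<Rightarrow> 'm::ab_group_add \<Rightarrow> 'm) \<Rightarrow> ('r \<Rightarrow> 'n::ab_group_add \<Rightarrow> 'n)
    \<Rightarrow> ('m \<Rightarrow> 'n) \<Rightarrow> bool" where
  "R_linear smul1 smul2 f \<longleftrightarrow> (\<forall>x y. f (x + y) = f x + f y) \<and> (\<forall>r x. f (smul1 r x) = smul2 r (f x))"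

definition graded_rank :: "('k::field \<Rightarrow> 'r::comm_ring_1) \<Rightarrow> ('r \<Rightarrow> 'm::ab_group_add \<Rightarrow> 'm)
    \<Rightarrow> (int \<Rightarrow> 'm set) \<Rightarrow> int \<Rightarrow> nat" where
  "graded_rank iota smul MG n = vector_space.dim (\<lambda>c x. smul (iota c) x) (MG n)"

definition hilbert_series :: "('k::field \<Rightarrow> 'r::comm_ring_1) \<Rightarrow> ('r \<Rightarrow> 'm::ab_group_add \<Rightarrow> 'm)
    \<Rightarrow> (int \<Rightarrow> 'm set) \<Rightarrow> int fls" where
  "hilbert_series iota smul MG = Abs_fls (\<lambda>n. int (graded_rank iota smul MG n))"

(* R regarded as a graded module over itself (nonzero components only in degrees \<ge> 0). *)
definition int_grading :: "(nat \<Rightarrow> 'r::zero set) \<Rightarrow> int \<Rightarrow> 'r set" where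
  "int_grading G n = (if n \<ge> 0 then G (nat n) else {0})"

definition exact_zero_divisor_pair :: "'r::comm_ring_1 \<Rightarrow> 'r \<Rightarrow> bool" where
  "exact_zero_divisor_pair a b \<longleftrightarrow>
     a \<noteq> 0 \<and> b \<noteq> 0 \<and> \<not> a dvd 1 \<and> \<not> b dvd 1 \<and>
     {r. a * r = 0} = range (\<lambda>r. b * r) \<and> {r. b * r = 0} = range (\<lambda>r. a * r)"

end

theory Submission
  imports Defs "HOL-Library.List_Lexorder"
begin

section \<open>Direct sum decompositions\<close>

lemma dsd_0: "direct_sum_decomp D \<Longrightarrow> 0 \<in> D n"
  unfolding direct_sum_decomp_def by auto
lemma dsd_add: "direct_sum_decomp D \<Longrightarrow> x \<in> D n \<Longrightarrow> y \<in> D n \<Longrightarrow> x + y \<in> D n"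
  unfolding direct_sum_decomp_def by auto
lemma dsd_uminus: "direct_sum_decomp D \<Longrightarrow> x \<in> D n \<Longrightarrow> - x \<in> D n"
  unfolding direct_sum_decomp_def by auto
lemma dsd_diff: "direct_sum_decomp D \<Longrightarrow> x \<in> D n \<Longrightarrow> y \<in> D n \<Longrightarrow> x - y \<in> D n"
  using dsd_add[of D x n "-y"] dsd_uminus[of D y n] by simp
lemma dsd_sum: "direct_sum_decomp D \<Longrightarrow> (\<And>i. i \<in> A \<Longrightarrow> f i \<in> D n) \<Longrightarrow> sum f A \<in> D n"
  by (induction A rule: infinite_finite_induct) (auto intro: dsd_0 dsd_add)

lemma dsd_exists:
  assumes "direct_sum_decomp D"
  obtains c A where "finite A" "\<And>j. c j \<in> D j" "x = sum c A"
  using assms unfolding direct_sum_decomp_def by blast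

lemma dsd_unique:
  assumes D: "direct_sum_decomp D" and A: "finite A" and A': "finite A'"
    and c: "\<And>j. c j \<in> D j" and c': "\<And>j. c' j \<in> D j"
    and cA: "\<And>j. j \<notin> A \<Longrightarrow> c j = 0" and cA': "\<And>j. j \<notin> A' \<Longrightarrow> c' j = 0"
    and eq: "sum c A = sum c' A'"
  shows "c = c'"
proof -
  let ?P = "\<lambda>c1. finite {n. c1 n \<noteq> 0} \<and> (\<forall>n. c1 n \<in> D n) \<and> sum c A = sum c1 {n. c1 n \<noteq> 0}"
  have ex1: "\<exists>!c1. ?P c1" using D unfolding direct_sum_decomp_def by blast
  have s1: "{n. c n \<noteq> 0} \<subseteq> A" using cA by auto
  have s2: "{n. c' n \<noteq> 0} \<subseteq> A'" using cA' by auto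
  have "sum c A = sum c {n. c n \<noteq> 0}"
    by (rule sum.mono_neutral_right[OF A s1]) auto
  moreover have "sum c' A' = sum c' {n. c' n \<noteq> 0}"
    by (rule sum.mono_neutral_right[OF A' s2]) auto
  ultimately have "?P c" "?P c'" using c c' eq finite_subset[OF s1 A] finite_subset[OF s2 A'] by auto
  with ex1 show ?thesis by blast
qed

lemma dsd_homog:
  assumes D: "direct_sum_decomp D" and A: "finite A" and c: "\<And>j. j \<in> A \<Longrightarrow> c j \<in> D j"
    and x: "x \<in> D n" and eq: "x = sum c A"
  shows "j \<in> A \<Longrightarrow> j \<noteq> n \<Longrightarrow> c j = 0" "n \<in> A \<Longrightarrow> c n = x" "n \<notin> A \<Longrightarrow> x = 0"
proof -
  let ?c1 = "\<lambda>j. if j \<in> A then c j else 0"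
  let ?c2 = "\<lambda>j. if j = n then x else 0"
  have "?c1 = ?c2"
    by (rule dsd_unique[OF D A, of "{n}"]) (use x eq in \<open>auto simp: c dsd_0[OF D]\<close>)
  then have e: "?c1 j = ?c2 j" for j by metis
  show "j \<in> A \<Longrightarrow> j \<noteq> n \<Longrightarrow> c j = 0" using e[of j] by auto
  show "n \<in> A \<Longrightarrow> c n = x" using e[of n] by auto
  show "n \<notin> A \<Longrightarrow> x = 0" using e[of n] by auto
qed

lemma dsd_disjoint:
  assumes D: "direct_sum_decomp D" and "x \<in> D n" "x \<in> D m" "n \<noteq> m"
  shows "x = 0"
  using dsd_homog(3)[OF D, of "{m}" "\<lambda>_. x" x n] assms by auto

section \<open>Rank nullity on subspaces\<close>

lemma indep_span_disjoint:
  assumes "vector_space s" "module.independent s (A \<union> B)" "A \<inter> B = {}"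
    "x \<in> module.span s A" "x \<in> module.span s B" "finite A" "finite B"
  shows "x = 0"
proof -
  interpret V: vector_space s by fact
  obtain r where r: "x = (\<Sum>v\<in>A. s (r v) v)" using assms(4) V.span_finite[OF assms(6)] by auto
  obtain t where t: "x = (\<Sum>v\<in>B. s (t v) v)" using assms(5) V.span_finite[OF assms(7)] by auto
  define g where "g v = (if v \<in> A then r v else - t v)" for v
  have "(\<Sum>v\<in>A \<union> B. s (g v) v) = (\<Sum>v\<in>A. s (g v) v) + (\<Sum>v\<in>B. s (g v) v)"
    using assms(3,6,7) by (simp add: sum.union_disjoint)
  also have "(\<Sum>v\<in>A. s (g v) v) = x" using r by (simp add: g_def)
  also have "(\<Sum>v\<in>B. s (g v) v) = - x" using t assms(3)
    by (auto simp: g_def sum_negf[symmetric] intro!: sum.cong)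
  finally have z: "(\<Sum>v\<in>A \<union> B. s (g v) v) = 0" by simp
  have "\<forall>v\<in>A. g v = 0"
    using V.independentD[OF assms(2), of "A \<union> B" g] z assms(6,7) by auto
  then show ?thesis using r by (simp add: g_def)
qed

lemma rank_nullity_sub:
  fixes s1 :: "'a::field \<Rightarrow> 'b::ab_group_add \<Rightarrow> 'b" and s2 :: "'a \<Rightarrow> 'c::ab_group_add \<Rightarrow> 'c"
  assumes lin: "Vector_Spaces.linear s1 s2 f"
    and sub: "module.subspace s1 V" and VW: "V \<subseteq> module.span s1 W" and W: "finite W"
  shows "vector_space.dim s1 V = vector_space.dim s1 {x\<in>V. f x = 0} + vector_space.dim s2 (f ` V)"
proof -
  interpret L: Vector_Spaces.linear s1 s2 f by fact
  let ?K = "{x\<in>V. f x = 0}"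
  obtain BK where BK: "BK \<subseteq> ?K" "L.vs1.independent BK" "?K \<subseteq> L.vs1.span BK"
    using L.vs1.maximal_independent_subset by blast
  obtain B where B: "BK \<subseteq> B" "B \<subseteq> V" "L.vs1.independent B" "V \<subseteq> L.vs1.span B"
    using L.vs1.maximal_independent_subset_extend[of BK V] BK by auto
  have finB: "finite B" using L.vs1.independent_span_bound[OF W B(3)] B(2) VW by auto
  have finBK: "finite BK" using finite_subset[OF B(1) finB] .
  define C where "C = B - BK"
  have finC: "finite C" using finB by (simp add: C_def)
  have dV: "L.vs1.dim V = card B" using L.vs1.basis_card_eq_dim[OF B(2,4,3)] by simp
  have dK: "L.vs1.dim ?K = card BK" using L.vs1.basis_card_eq_dim[OF BK(1,3,2)] by simp
  have spC: "L.vs1.span C \<subseteq> V" using B(2) sub by (intro L.vs1.span_minimal) (auto simp: C_def)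
  have inj: "inj_on f (L.vs1.span C)"
    unfolding L.inj_on_iff_eq_0[OF L.vs1.subspace_span]
  proof (intro ballI impI)
    fix x assume x: "x \<in> L.vs1.span C" "f x = 0"
    then have "x \<in> ?K" using spC by auto
    then have "x \<in> L.vs1.span BK" using BK by auto
    moreover have "BK \<union> C = B" "BK \<inter> C = {}" using B(1) by (auto simp: C_def)
    ultimately show "x = 0"
      using indep_span_disjoint[of s1 BK C x] x B(3) finBK finC L.vs1.vector_space_axioms by auto
  qed
  have indC: "L.vs2.independent (f ` C)"
    using L.independent_injective_image[OF _ inj] B(3) L.vs1.independent_mono[of B C] by (auto simp: C_def)
  have injC: "inj_on f C" using inj L.vs1.span_superset inj_on_subset by blast
  have "f ` V \<subseteq> f ` L.vs1.span B" using B(4) by auto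
  also have "\<dots> = L.vs2.span (f ` B)" by (simp add: L.span_image)
  also have "\<dots> \<subseteq> L.vs2.span (f ` C)"
  proof (rule L.vs2.span_minimal)
    show "f ` B \<subseteq> L.vs2.span (f ` C)"
    proof
      fix y assume "y \<in> f ` B"
      then obtain b where "b \<in> B" "y = f b" by auto
      then show "y \<in> L.vs2.span (f ` C)"
        using BK(1) L.vs2.span_zero L.vs2.span_base by (cases "b \<in> BK") (auto simp: C_def)
    qed
  qed simp
  finally have fV: "f ` V \<subseteq> L.vs2.span (f ` C)" .
  have "f ` C \<subseteq> f ` V" using B(2) by (auto simp: C_def)
  then have dfV: "L.vs2.dim (f ` V) = card (f ` C)"
    using L.vs2.basis_card_eq_dim[OF _ fV indC] by simp
  have "card B = card BK + card C"
    using card_Diff_subset[OF finBK B(1)] card_mono[OF finB B(1)] by (simp add: C_def)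
  then show ?thesis using dV dK dfV card_image[OF injC] by simp
qed

lemma module_mult: "module ((*) :: 'a::comm_ring_1 \<Rightarrow> 'a \<Rightarrow> 'a)"
  by unfold_locales (auto simp: algebra_simps)

locale sga =
  fixes iota :: "'k::field \<Rightarrow> 'r::comm_ring_1" and G :: "nat \<Rightarrow> 'r set" and xs :: "'r list"
  assumes R: "standard_graded_algebra iota G"
    and xsG: "set xs \<subseteq> G 1" and xsgen: "alg_gen iota (set xs) = UNIV"
begin

lemma iota_1[simp]: "iota 1 = 1" and iota_add[simp]: "iota (x + y) = iota x + iota y"
  and iota_mult[simp]: "iota (x * y) = iota x * iota y" and iota_inj: "inj iota"
  and dsdG: "direct_sum_decomp G" and G_iota: "z \<in> G n \<Longrightarrow> iota c * z \<in> G n"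
  and G_mult: "a \<in> G m \<Longrightarrow> b \<in> G n \<Longrightarrow> a * b \<in> G (m + n)"
  and G0: "G 0 = range iota"
  using R unfolding standard_graded_algebra_def by auto

lemma iota_0[simp]: "iota 0 = 0"
  using iota_add[of 0 0] by simp

lemma iota_in_G0: "iota c \<in> G 0" using G0 by auto
lemma one_in_G0: "1 \<in> G 0" using iota_in_G0[of 1] by simp

abbreviation "d \<equiv> length xs"

definition mon :: "nat list \<Rightarrow> 'r" where
  "mon u = (\<Prod>i<d. xs ! i ^ (u ! i))"

definition E :: "nat \<Rightarrow> nat list set" where
  "E n = {u. length u = d \<and> sum_list u = n}"

lemma finite_E: "finite (E n)"
proof -
  have "E n \<subseteq> {u. set u \<subseteq> {0..n} \<and> length u = d}"
    by (auto simp: E_def dest: member_le_sum_list)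
  then show ?thesis by (rule finite_subset) (rule finite_lists_length_eq, simp)
qed

lemma pow_in_G: "x \<in> G 1 \<Longrightarrow> x ^ k \<in> G k"
proof (induction k)
  case 0 then show ?case using one_in_G0 by simp
next
  case (Suc k) then show ?case using G_mult[of x 1 "x^k" k] by simp
qed

lemma prod_in_G: "(\<And>i. i \<in> A \<Longrightarrow> f i \<in> G (g i)) \<Longrightarrow> prod f A \<in> G (sum g A)"
proof (induction A rule: infinite_finite_induct)
  case (insert a A) then show ?case using G_mult[of "f a" "g a" "prod f A" "sum g A"] by simp
qed (auto simp: one_in_G0)

lemma sum_list_nth_lessThan: "sum_list u = (\<Sum>i<length u. u ! i)"
  by (simp add: sum_list_sum_nth atLeast0LessThan)

lemma xs_nth_G: "i < d \<Longrightarrow> xs ! i \<in> G 1"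
  by (metis nth_mem subsetD xsG)

lemma mon_in_G: assumes "length u = d" shows "mon u \<in> G (sum_list u)"
proof -
  have "mon u \<in> G (\<Sum>i<d. u ! i)"
    unfolding mon_def by (rule prod_in_G) (auto intro!: pow_in_G xs_nth_G)
  then show ?thesis using assms by (simp add: sum_list_nth_lessThan)
qed

lemma mon_add: "length u = d \<Longrightarrow> length w = d \<Longrightarrow> mon (map2 (+) u w) = mon u * mon w"
  unfolding mon_def by (simp add: power_add prod.distrib)

definition ev :: "nat \<Rightarrow> nat list" where "ev i = (replicate d 0)[i := 1]"

lemma mon_zero: "mon (replicate d 0) = 1" by (simp add: mon_def)

lemma mon_ev: "i < d \<Longrightarrow> mon (ev i) = xs ! i"
proof -
  assume i: "i < d"
  have "mon (ev i) = (\<Prod>j\<in>{i}. xs ! j ^ (ev i ! j))"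
    unfolding mon_def by (rule prod.mono_neutral_right) (use i in \<open>auto simp: ev_def\<close>)
  then show ?thesis using i by (simp add: ev_def)
qed

lemma length_ev[simp]: "length (ev i) = d" by (simp add: ev_def)

end

context sga begin

abbreviation ks :: "('r \<Rightarrow> 'm::ab_group_add \<Rightarrow> 'm) \<Rightarrow> 'k \<Rightarrow> 'm \<Rightarrow> 'm" where
  "ks smul \<equiv> \<lambda>c x. smul (iota c) x"

lemma vs_ks: "module smul \<Longrightarrow> vector_space (ks smul)"
  unfolding module_def vector_space_def by (simp add: distrib_right)

lemma span_monZ:
  fixes smul :: "'r \<Rightarrow> 'm::ab_group_add \<Rightarrow> 'm"
  assumes M: "module smul" and T0: "module.span smul T0 = UNIV"
  shows "module.span (ks smul) {smul (mon u) m | u m. length u = d \<and> m \<in> T0} = UNIV"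
proof -
  interpret M: module smul by fact
  interpret V: vector_space "ks smul" using vs_ks[OF M] .
  define Z where "Z = {smul (mon u) m | u m. length u = d \<and> m \<in> T0}"
  define S where "S = V.span Z"
  have cl: "\<forall>v\<in>S. smul r v \<in> S" if r: "r \<in> alg_gen iota (set xs)" for r
    using r
  proof (induction r rule: alg_gen.induct)
    case (const c) then show ?case unfolding S_def using V.span_scale by blast
  next
    case (gen s)
    then obtain i where i: "i < d" "s = xs ! i" by (auto simp: in_set_conv_nth)
    have sub: "V.subspace {v. smul s v \<in> S}"
      unfolding V.subspace_def S_def
      apply (intro conjI ballI allI)
        apply (simp add: V.span_zero)
       apply (simp add: M.scale_right_distrib V.span_add)
      subgoal for c x using V.span_scale[of "smul s x" Z c] by (simp add: M.scale_scale mult.commute)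
      done
    have "Z \<subseteq> {v. smul s v \<in> S}"
    proof
      fix z assume "z \<in> Z"
      then obtain u m where z: "z = smul (mon u) m" "length u = d" "m \<in> T0" by (auto simp: Z_def)
      have "smul s z = smul (mon (map2 (+) u (ev i))) m"
        using z i by (simp add: M.scale_scale mon_add mon_ev mult.commute)
      moreover have "smul (mon (map2 (+) u (ev i))) m \<in> Z"
      proof -
        have "length (map2 (+) u (ev i)) = d" using z by simp
        then show ?thesis using z unfolding Z_def by blast
      qed
      ultimately show "z \<in> {v. smul s v \<in> S}" by (auto simp: S_def intro: V.span_base)
    qed
    then have "S \<subseteq> {v. smul s v \<in> S}" unfolding S_def by (rule V.span_minimal[OF _ sub[unfolded S_def]])
    then show ?case by auto
  next
    case (add x y)
    show ?case
    proof
      fix v assume v: "v \<in> S"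
      have "smul x v \<in> S" "smul y v \<in> S" using add.IH v by blast+
      then show "smul (x + y) v \<in> S" unfolding M.scale_left_distrib S_def by (rule V.span_add)
    qed
  next
    case (mult x y)
    show ?case
    proof
      fix v assume v: "v \<in> S"
      have "smul y v \<in> S" using mult.IH v by blast
      then have "smul x (smul y v) \<in> S" using mult.IH by blast
      then show "smul (x * y) v \<in> S" by (simp add: M.scale_scale)
    qed
  qed
  have "M.subspace S"
    unfolding M.subspace_def using cl xsgen by (auto simp: S_def V.span_zero V.span_add)
  moreover have "T0 \<subseteq> S"
  proof
    fix m assume "m \<in> T0"
    then have "smul (mon (replicate d 0)) m \<in> Z" unfolding Z_def by force
    then show "m \<in> S" by (auto simp: mon_zero S_def intro: V.span_base)
  qed
  ultimately have "M.span T0 \<subseteq> S" by (rule M.span_minimal[rotated])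
  then show ?thesis using T0 by (auto simp: S_def Z_def)
qed

lemma span_homog:
  fixes smul :: "'r \<Rightarrow> 'm::ab_group_add \<Rightarrow> 'm" and MG :: "int \<Rightarrow> 'm set"
  assumes D: "direct_sum_decomp MG" and cl: "\<And>c n x. x \<in> MG n \<Longrightarrow> smul (iota c) x \<in> MG n"
    and M: "module smul" and Z: "\<And>z. z \<in> Z \<Longrightarrow> \<exists>j. z \<in> MG j"
    and x: "x \<in> MG n" "x \<in> module.span (ks smul) Z"
  shows "x \<in> module.span (ks smul) (Z \<inter> MG n)"
proof -
  interpret V: vector_space "ks smul" using vs_ks[OF M] .
  obtain t r where t: "finite t" "t \<subseteq> Z" "x = (\<Sum>a\<in>t. smul (iota (r a)) a)"
    using x(2) unfolding V.span_explicit by blast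
  define deg where "deg a = (SOME j. a \<in> MG j)" for a
  have deg: "a \<in> MG (deg a)" if "a \<in> Z" for a
    unfolding deg_def using Z[OF that] by (rule someI_ex)
  define c where "c j = (\<Sum>a\<in>{a\<in>t. deg a = j}. smul (iota (r a)) a)" for j
  have xc: "x = sum c (deg ` t)" unfolding c_def t(3) by (rule sum.image_gen[OF t(1)])
  have cj: "c j \<in> MG j" for j
    unfolding c_def by (rule dsd_sum[OF D]) (use deg t(2) cl in auto)
  have cspan: "c n \<in> V.span (Z \<inter> MG n)"
    unfolding c_def by (intro V.span_sum V.span_scale[of _ _ c' for c', simplified] V.span_base)
       (use deg t(2) in auto)
  show ?thesis
  proof (cases "n \<in> deg ` t")
    case True
    then show ?thesis using dsd_homog(2)[OF D _ _ x(1) xc] t(1) cj cspan by auto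
  next
    case False
    then show ?thesis using dsd_homog(3)[OF D _ _ x(1) xc] t(1) cj V.span_zero by auto
  qed
qed

definition Zn :: "('r \<Rightarrow> 'm::ab_group_add \<Rightarrow> 'm) \<Rightarrow> (int \<times> 'm) set \<Rightarrow> int \<Rightarrow> 'm set" where
  "Zn smul T n = {smul (mon u) m | u m j. (j, m) \<in> T \<and> j \<le> n \<and> u \<in> E (nat (n - j))}"

lemma finite_Zn: "finite T \<Longrightarrow> finite (Zn smul T n)"
proof -
  assume T: "finite T"
  have "Zn smul T n \<subseteq> (\<lambda>(p, u). smul (mon u) (snd p)) ` (SIGMA p:T. E (nat (n - fst p)))"
    unfolding Zn_def by (auto simp: image_iff) force
  then show ?thesis by (rule finite_subset) (auto intro!: finite_SigmaI T finite_E)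
qed

lemma Zn_empty: "(\<And>j m. (j, m) \<in> T \<Longrightarrow> n < j) \<Longrightarrow> Zn smul T n = {}"
  unfolding Zn_def by force

lemma graded_module_facts:
  assumes "graded_module G smul MG"
  shows "module smul" "direct_sum_decomp MG" "\<And>r x i n. r \<in> G i \<Longrightarrow> x \<in> MG n \<Longrightarrow> smul r x \<in> MG (int i + n)"
    "\<And>c x n. x \<in> MG n \<Longrightarrow> smul (iota c) x \<in> MG n"
  using assms unfolding graded_module_def apply auto
  using iota_in_G0 by fastforce

lemma module_fin:
  fixes smul :: "'r \<Rightarrow> 'm::ab_group_add \<Rightarrow> 'm" and MG :: "int \<Rightarrow> 'm set"
  assumes gm: "graded_module G smul MG" and T: "finite T" "\<And>j m. (j, m) \<in> T \<Longrightarrow> m \<in> MG j"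
    and sp: "module.span smul (snd ` T) = UNIV"
  shows "MG n \<subseteq> module.span (ks smul) (Zn smul T n)"
proof
  note gf = graded_module_facts[OF gm]
  interpret V: vector_space "ks smul" using vs_ks[OF gf(1)] .
  define Z where "Z = {smul (mon u) m | u m. length u = d \<and> m \<in> snd ` T}"
  have spZ: "V.span Z = UNIV" unfolding Z_def by (rule span_monZ[OF gf(1) sp])
  have Zdeg: "smul (mon u) m \<in> MG (int (sum_list u) + j)" if "(j, m) \<in> T" "length u = d" for u m j
    using gf(3)[OF mon_in_G[OF that(2)] T(2)[OF that(1)]] .
  fix x assume x: "x \<in> MG n"
  have xZ: "x \<in> V.span Z" by (simp add: spZ)
  have "x \<in> V.span (Z \<inter> MG n)"
  proof (rule span_homog[OF gf(2) gf(4) gf(1) _ x xZ])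
    show "\<exists>j. z \<in> MG j" if "z \<in> Z" for z
    proof -
      from that obtain u m j where "z = smul (mon u) m" "length u = d" "(j, m) \<in> T"
        unfolding Z_def by auto
      then show ?thesis using Zdeg by blast
    qed
  qed
  moreover have "Z \<inter> MG n \<subseteq> insert 0 (Zn smul T n)"
  proof
    fix z assume z: "z \<in> Z \<inter> MG n"
    then obtain u m j where zz: "z = smul (mon u) m" "length u = d" "(j, m) \<in> T"
      unfolding Z_def by auto
    show "z \<in> insert 0 (Zn smul T n)"
    proof (cases "int (sum_list u) + j = n")
      case True
      then have "j \<le> n" "u \<in> E (nat (n - j))" using zz by (auto simp: E_def)
      then show ?thesis using zz unfolding Zn_def by blast
    next
      case False
      then show ?thesis using dsd_disjoint[OF gf(2), of z n] z Zdeg[OF zz(3,2)] zz(1) by auto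
    qed
  qed
  then have "V.span (Z \<inter> MG n) \<subseteq> V.span (Zn smul T n)"
    by (metis V.span_insert_0 V.span_mono)
  ultimately show "x \<in> V.span (Zn smul T n)" by auto
qed

end

lemma graded_preimage:
  fixes f :: "'a::ab_group_add \<Rightarrow> 'b::ab_group_add" and D1 :: "int \<Rightarrow> 'a set"
  assumes D1: "direct_sum_decomp D1" and D2: "direct_sum_decomp D2"
    and add: "\<And>x y. f (x + y) = f x + f y" and gr: "\<And>j. f ` D1 j \<subseteq> D2 (j + s)"
    and q: "q \<in> D2 n" "q = f x"
  shows "\<exists>y\<in>D1 (n - s). q = f y"
proof -
  have f0: "f 0 = 0" using add[of 0 0] by simp
  have fsum: "f (sum g A) = (\<Sum>a\<in>A. f (g a))" for g and A :: "int set"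
  proof (induction A rule: infinite_finite_induct)
    case (insert a A)
    then show ?case by (simp add: add)
  qed (simp_all add: f0)
  obtain c A where cA: "finite A" "\<And>j. c j \<in> D1 j" "x = sum c A" using dsd_exists[OF D1, of x] by blast
  define c' where "c' i = f (c (i - s))" for i
  have "q = (\<Sum>j\<in>A. f (c j))" using q cA by (simp add: fsum)
  also have "\<dots> = sum c' ((\<lambda>j. j + s) ` A)"
    by (subst sum.reindex) (auto simp: inj_on_def c'_def)
  finally have qs: "q = sum c' ((\<lambda>j. j + s) ` A)" .
  have c'D: "c' i \<in> D2 i" for i using gr[of "i - s"] cA(2)[of "i - s"] by (auto simp: c'_def)
  show ?thesis
  proof (cases "n \<in> (\<lambda>j. j + s) ` A")
    case True
    then have "c' n = q" using dsd_homog(2)[OF D2 _ _ q(1) qs] cA(1) c'D by auto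
    then show ?thesis using cA(2) by (auto simp: c'_def)
  next
    case False
    then have "q = 0" using dsd_homog(3)[OF D2 _ _ q(1) qs] cA(1) c'D by auto
    then show ?thesis using dsd_0[OF D1] f0 by auto
  qed
qed

lemma dim_zero_sp: "vector_space s \<Longrightarrow> vector_space.dim s {0} = 0"
proof -
  assume "vector_space s"
  interpret V: vector_space s by fact
  have "V.dim {0} = V.dim {}" by (rule V.span_eq_dim) simp
  then show ?thesis using V.dim_eq_card_independent[of "{}"] V.independent_empty by simp
qed

context sga begin

lemma lin_ks:
  assumes "module s1" "module s2" "R_linear s1 s2 f"
  shows "Vector_Spaces.linear (ks s1) (ks s2) f"
  using assms vs_ks[OF assms(1)] vs_ks[OF assms(2)]
  unfolding module_hom_iff_linear[symmetric] module_hom_iff module_iff_vector_space R_linear_def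
  by simp

lemma subspace_MG:
  assumes "graded_module G smul MG" shows "module.subspace (ks smul) (MG n)"
proof -
  note gf = graded_module_facts[OF assms]
  interpret V: vector_space "ks smul" using vs_ks[OF gf(1)] .
  show ?thesis unfolding V.subspace_def using gf by (auto intro: dsd_0 dsd_add)
qed

lemma fin_gen_facts:
  fixes smul :: "'r \<Rightarrow> 'm::ab_group_add \<Rightarrow> 'm"
  assumes gm: "graded_module G smul MG" and fg: "fin_gen_module smul"
  shows "\<exists>W. finite W \<and> MG n \<subseteq> module.span (ks smul) W" "\<exists>n0. \<forall>n<n0. MG n \<subseteq> {0}"
proof -
  note gf = graded_module_facts[OF gm]
  interpret M: module smul by (rule gf(1))
  interpret V: vector_space "ks smul" using vs_ks[OF gf(1)] .
  obtain S where S: "finite S" "M.span S = UNIV" using fg unfolding fin_gen_module_def by blast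
  have "\<forall>s. \<exists>c A. finite A \<and> (\<forall>j. c j \<in> MG j) \<and> s = sum c A"
    using dsd_exists[OF gf(2)] by metis
  then obtain c A where cA: "\<And>s. finite (A s)" "\<And>s j. c s j \<in> MG j" "\<And>s. s = sum (c s) (A s)"
    by metis
  define T where "T = (\<Union>s\<in>S. (\<lambda>j. (j, c s j)) ` A s)"
  have T: "finite T" using S(1) cA(1) by (auto simp: T_def)
  have T2: "m \<in> MG j" if "(j, m) \<in> T" for j m using that cA(2) by (auto simp: T_def)
  have "S \<subseteq> M.span (snd ` T)"
  proof
    fix s assume s: "s \<in> S"
    have "sum (c s) (A s) \<in> M.span (snd ` T)"
      by (intro M.span_sum M.span_base) (use s in \<open>force simp: T_def\<close>)
    then show "s \<in> M.span (snd ` T)" using cA(3)[of s] by simp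
  qed
  then have "M.span S \<subseteq> M.span (snd ` T)" by (simp add: M.span_minimal)
  then have sp: "M.span (snd ` T) = UNIV" using S(2) by auto
  note mf = module_fin[OF gm T T2 sp]
  show "\<exists>W. finite W \<and> MG n \<subseteq> V.span W" using mf finite_Zn[OF T] by blast
  define n0 where "n0 = (if T = {} then 0 else Min (fst ` T))"
  have "MG n \<subseteq> {0}" if "n < n0" for n
  proof -
    have "Zn smul T n = {}"
    proof (rule Zn_empty)
      fix j m assume jm: "(j, m) \<in> T"
      then have "n0 = Min (fst ` T)" by (auto simp: n0_def)
      moreover have "j \<in> fst ` T" using jm by force
      then have "Min (fst ` T) \<le> j" using T by (intro Min_le) auto
      ultimately show "n < j" using that by simp
    qed
    then show ?thesis using mf[of n] by simp
  qed
  then show "\<exists>n0. \<forall>n<n0. MG n \<subseteq> {0}" by blast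
qed

end

context sga begin

lemma part1:
  fixes smul :: "'r \<Rightarrow> 'm::ab_group_add \<Rightarrow> 'm" and MG :: "int \<Rightarrow> 'm set"
    and smulQ :: "'r \<Rightarrow> 'q::ab_group_add \<Rightarrow> 'q" and QG :: "int \<Rightarrow> 'q set"
  assumes a1: "a \<in> G 1" and gm: "graded_module G smul MG" and fg: "fin_gen_module smul"
    and gq: "graded_module G smulQ QG"
    and pl: "R_linear smul smulQ \<pi>" and ps: "surj \<pi>" and pg: "\<forall>n. \<pi> ` MG n \<subseteq> QG n"
    and pk: "{x. \<pi> x = 0} = range (smul a)"
    and yl: "R_linear smulQ smul \<psi>" and yi: "inj \<psi>" and yr: "range \<psi> = {x. smul a x = 0}"
    and yg: "\<forall>n. \<psi> ` QG n \<subseteq> MG (n + 1)"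
  shows "hilbert_series iota smul MG = (1 + fls_X) * hilbert_series iota smulQ QG"
proof -
  note gf = graded_module_facts[OF gm]
  note gqf = graded_module_facts[OF gq]
  interpret M: module smul by (rule gf(1))
  interpret Q: module smulQ by (rule gqf(1))
  interpret VM: vector_space "ks smul" using vs_ks[OF gf(1)] .
  interpret VQ: vector_space "ks smulQ" using vs_ks[OF gqf(1)] .
  have Rla: "R_linear smul smul (smul a)"
    unfolding R_linear_def by (simp add: M.scale_right_distrib M.scale_scale mult.commute)
  have linP: "Vector_Spaces.linear (ks smul) (ks smulQ) \<pi>" by (rule lin_ks[OF gf(1) gqf(1) pl])
  have linY: "Vector_Spaces.linear (ks smulQ) (ks smul) \<psi>" by (rule lin_ks[OF gqf(1) gf(1) yl])
  have linA: "Vector_Spaces.linear (ks smul) (ks smul) (smul a)" by (rule lin_ks[OF gf(1) gf(1) Rla])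
  interpret P: Vector_Spaces.linear "ks smul" "ks smulQ" \<pi> by (rule linP)
  interpret Y: Vector_Spaces.linear "ks smulQ" "ks smul" \<psi> by (rule linY)
  have padd: "\<pi> (x + y) = \<pi> x + \<pi> y" for x y using pl unfolding R_linear_def by blast
  have yadd: "\<psi> (x + y) = \<psi> x + \<psi> y" for x y using yl unfolding R_linear_def by blast
  have aadd: "smul a (x + y) = smul a x + smul a y" for x y by (simp add: M.scale_right_distrib)
  have aMG: "smul a ` MG j \<subseteq> MG (j + 1)" for j using gf(3)[OF a1, of _ j] by (auto simp: add.commute)
  have pMG: "\<pi> ` MG j \<subseteq> QG (j + 0)" for j using pg by simp
  have piMG: "\<pi> ` MG n = QG n" for n
  proof
    show "QG n \<subseteq> \<pi> ` MG n"
    proof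
      fix q assume q: "q \<in> QG n"
      obtain x where "q = \<pi> x" using ps by (metis surjD)
      then obtain y where "y \<in> MG (n - 0)" "q = \<pi> y"
        using graded_preimage[OF gf(2) gqf(2) padd pMG q] by blast
      then show "q \<in> \<pi> ` MG n" by auto
    qed
  qed (use pg in auto)
  have kerP: "{x \<in> MG n. \<pi> x = 0} = smul a ` MG (n - 1)" for n
  proof
    show "{x \<in> MG n. \<pi> x = 0} \<subseteq> smul a ` MG (n - 1)"
    proof
      fix x assume x: "x \<in> {x \<in> MG n. \<pi> x = 0}"
      then obtain y where "x = smul a y" using pk by auto
      then obtain y' where "y' \<in> MG (n - 1)" "x = smul a y'"
        using graded_preimage[OF gf(2) gf(2) aadd aMG, of x n y] x by blast
      then show "x \<in> smul a ` MG (n - 1)" by auto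
    qed
    show "smul a ` MG (n - 1) \<subseteq> {x \<in> MG n. \<pi> x = 0}"
      using aMG[of "n - 1"] pk by auto
  qed
  have kerA: "{x \<in> MG n. smul a x = 0} = \<psi> ` QG (n - 1)" for n
  proof
    show "{x \<in> MG n. smul a x = 0} \<subseteq> \<psi> ` QG (n - 1)"
    proof
      fix x assume x: "x \<in> {x \<in> MG n. smul a x = 0}"
      then obtain q where "x = \<psi> q" using yr by (metis (mono_tags, lifting) mem_Collect_eq rangeE)
      then obtain q' where "q' \<in> QG (n - 1)" "x = \<psi> q'"
        using graded_preimage[OF gqf(2) gf(2) yadd, of 1 x n q] yg x by blast
      then show "x \<in> \<psi> ` QG (n - 1)" by auto
    qed
    show "\<psi> ` QG (n - 1) \<subseteq> {x \<in> MG n. smul a x = 0}"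
      using yg yr by fastforce
  qed
  have kerY: "{x \<in> QG n. \<psi> x = 0} = {0}" for n
    using yi Y.zero dsd_0[OF gqf(2)] by (auto simp: inj_def)
  have finM: "\<exists>W. finite W \<and> MG n \<subseteq> VM.span W" for n using fin_gen_facts(1)[OF gm fg] by blast
  have finQ: "\<exists>W. finite W \<and> QG n \<subseteq> VQ.span W" for n
  proof -
    obtain W where W: "finite W" "MG n \<subseteq> VM.span W" using finM by blast
    have "QG n \<subseteq> \<pi> ` VM.span W" using W(2) piMG[of n] by (metis image_mono)
    also have "\<dots> = VQ.span (\<pi> ` W)" by (simp add: P.span_image)
    finally show ?thesis using W(1) by blast
  qed
  have subM: "VM.subspace (MG n)" for n by (rule subspace_MG[OF gm])
  have subQ: "VQ.subspace (QG n)" for n by (rule subspace_MG[OF gq])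
  define mm where "mm n = int (VM.dim (MG n))" for n
  define qq where "qq n = int (VQ.dim (QG n))" for n
  have e1: "VM.dim (MG n) = VM.dim (smul a ` MG (n - 1)) + VQ.dim (QG n)" for n
  proof -
    obtain W where W: "finite W" "MG n \<subseteq> VM.span W" using finM by blast
    show ?thesis using rank_nullity_sub[OF linP subM W(2) W(1)] kerP piMG by simp
  qed
  have e2: "VM.dim (MG (n - 1)) = VM.dim (\<psi> ` QG (n - 2)) + VM.dim (smul a ` MG (n - 1))" for n
  proof -
    obtain W where W: "finite W" "MG (n - 1) \<subseteq> VM.span W" using finM by blast
    show ?thesis using rank_nullity_sub[OF linA subM W(2) W(1)] kerA[of "n - 1"] by simp
  qed
  have e3: "VQ.dim (QG m) = VM.dim (\<psi> ` QG m)" for m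
  proof -
    obtain W where W: "finite W" "QG m \<subseteq> VQ.span W" using finQ by blast
    show ?thesis using rank_nullity_sub[OF linY subQ W(2) W(1)] kerY dim_zero_sp[OF VQ.vector_space_axioms]
      by simp
  qed
  have rec: "mm n = mm (n - 1) - qq (n - 2) + qq n" for n
    using e1[of n] e2[of n] e3[of "n - 2"] unfolding mm_def qq_def by simp
  obtain n0 where n0: "\<And>n. n < n0 \<Longrightarrow> MG n \<subseteq> {0}" using fin_gen_facts(2)[OF gm fg] by blast
  have M0: "MG n = {0}" if "n < n0" for n using n0[OF that] dsd_0[OF gf(2)] by auto
  have Q0: "QG n = {0}" if "n < n0" for n using piMG[of n] M0[OF that] P.zero by auto
  have mm0: "mm n = 0" if "n < n0" for n
    using M0[OF that] dim_zero_sp[OF VM.vector_space_axioms] by (simp add: mm_def)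
  have qq0: "qq n = 0" if "n < n0" for n
    using Q0[OF that] dim_zero_sp[OF VQ.vector_space_axioms] by (simp add: qq_def)
  define g where "g n = mm n - qq n - qq (n - 1)" for n
  have gstep: "g (n + 1) = g n" for n using rec[of "n + 1"] by (simp add: g_def)
  have g0: "g n = 0" for n
  proof (cases "n < n0")
    case True then show ?thesis using mm0 qq0 by (simp add: g_def)
  next
    case False
    then have "n0 - 1 \<le> n" by simp
    then show ?thesis
    proof (induction n rule: int_ge_induct)
      case base then show ?case using mm0 qq0 by (simp add: g_def)
    next
      case (step i) then show ?case using gstep[of i] by simp
    qed
  qed
  have HM: "fls_nth (hilbert_series iota smul MG) n = mm n" for n
    unfolding hilbert_series_def graded_rank_def mm_def
    by (rule nth_Abs_fls_lower_bound[of n0]) (use mm0 in \<open>simp add: mm_def\<close>)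
  have HQ: "fls_nth (hilbert_series iota smulQ QG) n = qq n" for n
    unfolding hilbert_series_def graded_rank_def qq_def
    by (rule nth_Abs_fls_lower_bound[of n0]) (use qq0 in \<open>simp add: qq_def\<close>)
  show ?thesis
  proof (rule fls_eqI)
    fix n
    have "fls_nth ((1 + fls_X) * hilbert_series iota smulQ QG) n
        = fls_nth (hilbert_series iota smulQ QG) n + fls_nth (hilbert_series iota smulQ QG) (n - 1)"
      by (simp add: distrib_right fls_X_times_conv_shift(1))
    then show "fls_nth (hilbert_series iota smul MG) n = fls_nth ((1 + fls_X) * hilbert_series iota smulQ QG) n"
      using HM HQ g0[of n] by (simp add: g_def)
  qed
qed

end

section \<open>Dickson's lemma\<close>

lemma nat_seq_mono_sub:
  fixes s :: "nat \<Rightarrow> nat"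
  shows "\<exists>g::nat\<Rightarrow>nat. strict_mono g \<and> (\<forall>i j. i \<le> j \<longrightarrow> s (g i) \<le> s (g j))"
proof -
  obtain f where f: "strict_mono f" "monoseq (\<lambda>n. s (f n))" using seq_monosub by blast
  show ?thesis
  proof (cases "\<forall>m n. m \<le> n \<longrightarrow> s (f m) \<le> s (f n)")
    case True then show ?thesis using f(1) by blast
  next
    case False
    then have dec: "\<forall>m n. m \<le> n \<longrightarrow> s (f n) \<le> s (f m)" using f(2) unfolding monoseq_def by blast
    define m where "m = (LEAST v. v \<in> range (\<lambda>n. s (f n)))"
    have "m \<in> range (\<lambda>n. s (f n))" unfolding m_def by (rule LeastI_ex) blast
    then obtain i0 where i0: "s (f i0) = m" by auto
    have ml: "m \<le> s (f n)" for n unfolding m_def by (rule Least_le) blast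
    have const: "s (f (i + i0)) = m" for i using dec[rule_format, of i0 "i + i0"] ml[of "i + i0"] i0 by simp
    have "strict_mono (\<lambda>i. f (i + i0))" using f(1) by (auto simp: strict_mono_def)
    then show ?thesis using const by (intro exI[of _ "\<lambda>i. f (i + i0)"]) auto
  qed
qed

lemma dickson:
  fixes f :: "nat \<Rightarrow> nat list"
  assumes "\<And>i. length (f i) = k"
  shows "\<exists>g::nat\<Rightarrow>nat. strict_mono g \<and> (\<forall>i j. i \<le> j \<longrightarrow> list_all2 (\<le>) (f (g i)) (f (g j)))"
  using assms
proof (induction k arbitrary: f)
  case 0
  then have fe: "f i = []" for i by simp
  show ?case by (rule exI[of _ "\<lambda>i::nat. i"]) (simp add: strict_mono_def fe)
next
  case (Suc k)
  have ft: "f i = hd (f i) # tl (f i)" for i using Suc.prems[of i] by (cases "f i") auto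
  obtain g1 :: "nat \<Rightarrow> nat" where g1: "strict_mono g1" "\<And>i j. i \<le> j \<Longrightarrow> list_all2 (\<le>) (tl (f (g1 i))) (tl (f (g1 j)))"
    using Suc.IH[of "\<lambda>i. tl (f i)"] Suc.prems by (auto simp del: list_all2_Cons)
  obtain g2 :: "nat \<Rightarrow> nat" where g2: "strict_mono g2" "\<And>i j. i \<le> j \<Longrightarrow> hd (f (g1 (g2 i))) \<le> hd (f (g1 (g2 j)))"
    using nat_seq_mono_sub[of "\<lambda>i. hd (f (g1 i))"] by auto
  have "strict_mono (g1 \<circ> g2)" using g1(1) g2(1) by (simp add: strict_mono_def)
  moreover have "list_all2 (\<le>) (f ((g1 \<circ> g2) i)) (f ((g1 \<circ> g2) j))" if "i \<le> j" for i j
  proof -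
    have "g2 i \<le> g2 j" using g2(1) that by (simp add: strict_mono_less_eq)
    then show ?thesis using g1(2) g2(2)[OF that] ft[of "g1 (g2 i)"] ft[of "g1 (g2 j)"]
      by (metis comp_apply list_all2_Cons)
  qed
  ultimately show ?case by blast
qed

definition upclosed :: "nat \<Rightarrow> nat list set \<Rightarrow> bool" where
  "upclosed k N \<longleftrightarrow> (\<forall>u\<in>N. length u = k) \<and> (\<forall>u\<in>N. \<forall>w. length w = k \<longrightarrow> map2 (+) u w \<in> N)"

lemma le_decomp: "list_all2 (\<le>) u (v::nat list) \<Longrightarrow> v = map2 (+) u (map2 (-) v u)"
  by (induction rule: list_all2_induct) auto

lemma upclosed_le:
  assumes "upclosed k N" "u \<in> N" "list_all2 (\<le>) u v" shows "v \<in> N"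
proof -
  have "length u = k" using assms unfolding upclosed_def by auto
  then have "length (map2 (-) v u) = k" using list_all2_lengthD[OF assms(3)] by simp
  then show ?thesis using assms le_decomp[OF assms(3)] unfolding upclosed_def by metis
qed

lemma stabilize:
  fixes N :: "nat \<Rightarrow> nat list set"
  assumes up: "\<And>j. upclosed k (N j)" and mono: "\<And>i j. i \<le> j \<Longrightarrow> N i \<subseteq> N j"
  shows "\<exists>J. \<forall>j\<ge>J. N j = N J"
proof (rule ccontr)
  assume "\<not> ?thesis"
  then have ex: "\<forall>J. \<exists>j\<ge>J. N j \<noteq> N J" by blast
  define nxt where "nxt J = (SOME j. j \<ge> J \<and> N j \<noteq> N J)" for J
  have nxt: "nxt J \<ge> J" "N (nxt J) \<noteq> N J" for J
    using someI_ex[OF ex[rule_format, of J]] by (auto simp: nxt_def)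
  define idx where "idx i = (nxt ^^ i) 0" for i
  have idxS: "idx (Suc i) = nxt (idx i)" for i by (simp add: idx_def)
  have idxm: "mono idx" unfolding mono_iff_le_Suc using nxt(1) idxS by auto
  have ps: "N (idx i) \<subset> N (idx (Suc i))" for i
    using nxt(2)[of "idx i"] mono[OF nxt(1)[of "idx i"]] unfolding idxS by blast
  have "\<forall>i. \<exists>u. u \<in> N (idx (Suc i)) - N (idx i)"
  proof
    fix i show "\<exists>u. u \<in> N (idx (Suc i)) - N (idx i)" using ps[of i] by blast
  qed
  then obtain u where u: "\<And>i. u i \<in> N (idx (Suc i)) - N (idx i)" by metis
  have len: "length (u i) = k" for i
  proof -
    have "u i \<in> N (idx (Suc i))" using u[of i] by blast
    then show ?thesis using up[of "idx (Suc i)"] unfolding upclosed_def by blast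
  qed
  obtain g :: "nat \<Rightarrow> nat" where g1: "strict_mono g" and g2: "\<forall>i j. i \<le> j \<longrightarrow> list_all2 (\<le>) (u (g i)) (u (g j))"
    using dickson[of u, OF len] by blast
  note g = g1 g2[rule_format]
  let ?i = "g 0" and ?j = "g 1"
  have ij: "?i < ?j" using g(1) by (simp add: strict_mono_def)
  have le: "idx (Suc ?i) \<le> idx ?j" using monoD[OF idxm, of "Suc ?i" ?j] ij by simp
  have "u ?i \<in> N (idx ?j)" using u[of ?i] mono[OF le] by blast
  then have "u ?j \<in> N (idx ?j)" by (rule upclosed_le[OF up]) (use g(2)[of 0 1] in simp)
  then show False using u[of ?j] by simp
qed

definition Ek :: "nat \<Rightarrow> nat \<Rightarrow> nat list set" where
  "Ek k n = {u. length u = k \<and> sum_list u = n}"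

lemma finite_Ek: "finite (Ek k n)"
proof -
  have "Ek k n \<subseteq> {u. set u \<subseteq> {0..n} \<and> length u = k}"
    by (auto simp: Ek_def dest: member_le_sum_list)
  then show ?thesis by (rule finite_subset) (rule finite_lists_length_eq, simp)
qed

definition ratF :: "nat \<Rightarrow> int fps \<Rightarrow> bool" where
  "ratF k F \<longleftrightarrow> (\<exists>p. F * (1 - fps_X) ^ k = fps_of_poly p)"

lemma fps_of_poly_1mX: "fps_of_poly [:1, -1:] = (1 - fps_X :: int fps)"
  by (rule fps_ext) (auto simp: coeff_pCons split: nat.splits)

lemma ratF_Suc: "ratF k F \<Longrightarrow> ratF (Suc k) F"
proof -
  assume "ratF k F"
  then obtain p where p: "F * (1 - fps_X) ^ k = fps_of_poly p" by (auto simp: ratF_def)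
  have "F * (1 - fps_X) ^ Suc k = (F * (1 - fps_X) ^ k) * (1 - fps_X)"
    by (simp add: power_Suc2 mult.assoc)
  also have "\<dots> = fps_of_poly (p * [:1, -1:])" by (simp add: p fps_of_poly_mult fps_of_poly_1mX)
  finally have "F * (1 - fps_X) ^ Suc k = fps_of_poly (p * [:1, -1:])" .
  then show ?thesis by (auto simp: ratF_def)
qed

lemma ratF_0: "ratF k 0" unfolding ratF_def by (intro exI[of _ 0]) simp

lemma ratF_add: "ratF k F \<Longrightarrow> ratF k H \<Longrightarrow> ratF k (F + H)"
  unfolding ratF_def by (auto simp: distrib_right fps_of_poly_add[symmetric])

lemma ratF_sum: "(\<And>j. j \<in> A \<Longrightarrow> ratF k (F j)) \<Longrightarrow> ratF k (\<Sum>j\<in>A. F j)"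
  by (induction A rule: infinite_finite_induct) (auto intro: ratF_add ratF_0)

lemma ratF_Xpow: "ratF k F \<Longrightarrow> ratF k (fps_X ^ j * F)"
proof -
  assume "ratF k F"
  then obtain p where p: "F * (1 - fps_X) ^ k = fps_of_poly p" by (auto simp: ratF_def)
  have "fps_X ^ j * F * (1 - fps_X) ^ k = fps_of_poly (monom 1 j * p)"
    by (simp add: fps_of_poly_mult fps_of_poly_monom flip: p)
  then show ?thesis by (auto simp: ratF_def)
qed

definition ones :: "int fps" where "ones = Abs_fps (\<lambda>_. 1)"

lemma ones_1mX: "ones * (1 - fps_X) = 1"
proof (rule fps_ext)
  fix n
  have "(ones * fps_X) $ n = (if n = 0 then 0 else 1)"
    by (simp add: fps_mult_fps_X_commute[symmetric] ones_def)
  then show "(ones * (1 - fps_X)) $ n = 1 $ n" by (simp add: algebra_simps ones_def)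
qed

lemma ratF_ones: "ratF k F \<Longrightarrow> ratF (Suc k) (F * ones)"
proof -
  assume "ratF k F"
  then obtain p where p: "F * (1 - fps_X) ^ k = fps_of_poly p" by (auto simp: ratF_def)
  have "F * ones * (1 - fps_X) ^ Suc k = F * (1 - fps_X) ^ k * (ones * (1 - fps_X))"
    by (simp add: algebra_simps)
  then have "F * ones * (1 - fps_X) ^ Suc k = fps_of_poly p" by (simp add: ones_1mX p)
  then show ?thesis by (auto simp: ratF_def)
qed

lemma map2_plus_zero: "map2 (+) u (replicate (length u) (0::nat)) = u"
  by (induction u) auto

lemma Ek_Suc: "Ek (Suc k) n - N = (\<Union>j\<in>{..n}. (Cons j) ` (Ek k (n - j) - {u. j # u \<in> N}))"
proof (intro set_eqI iffI)
  fix u assume u: "u \<in> Ek (Suc k) n - N"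
  then obtain j t where "u = j # t" by (cases u) (auto simp: Ek_def)
  then show "u \<in> (\<Union>j\<in>{..n}. (Cons j) ` (Ek k (n - j) - {u. j # u \<in> N}))"
    using u by (auto simp: Ek_def intro!: bexI[of _ j] image_eqI[of _ _ t])
qed (auto simp: Ek_def)

lemma card_Ek_Suc:
  "card (Ek (Suc k) n - N) = (\<Sum>j\<le>n. card (Ek k (n - j) - {u. j # u \<in> N}))"
  unfolding Ek_Suc
  by (subst card_UN_disjoint) (auto simp: card_image finite_Ek)

lemma count_main:
  assumes "upclosed k N"
  shows "ratF k (Abs_fps (\<lambda>n. int (card (Ek k n - N))))"
  using assms
proof (induction k arbitrary: N)
  case 0
  define c where "c = (if [] \<in> N then 0 else 1::int)"
  have "Abs_fps (\<lambda>n. int (card (Ek 0 n - N))) = fps_const c"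
  proof (rule fps_ext)
    fix n
    have "Ek 0 n = (if n = 0 then {[]} else {})" by (auto simp: Ek_def)
    then show "Abs_fps (\<lambda>n. int (card (Ek 0 n - N))) $ n = fps_const c $ n"
      by (auto simp: c_def insert_Diff_if)
  qed
  then show ?case unfolding ratF_def by (intro exI[of _ "[:c:]"]) simp
next
  case (Suc k)
  define Nj where "Nj j = {u. j # u \<in> N}" for j
  have up: "upclosed k (Nj j)" for j
    using Suc.prems unfolding upclosed_def Nj_def
  proof (intro conjI ballI allI impI)
    fix u w :: "nat list" assume a: "(\<forall>u\<in>N. length u = Suc k) \<and> (\<forall>u\<in>N. \<forall>w. length w = Suc k \<longrightarrow> map2 (+) u w \<in> N)"
      "u \<in> {u. j # u \<in> N}" "length w = k"
    have "length (0 # w) = Suc k" using a by simp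
    then have "map2 (+) (j # u) (0 # w) \<in> N" using a by blast
    then show "map2 (+) u w \<in> {u. j # u \<in> N}" by simp
  qed force
  have monoS: "Nj j \<subseteq> Nj (Suc j)" for j
  proof
    fix u assume "u \<in> Nj j"
    then have u: "j # u \<in> N" "length u = k" using Suc.prems by (auto simp: Nj_def upclosed_def)
    have "length (1 # replicate k 0) = Suc k" by simp
    then have "map2 (+) (j # u) (1 # replicate k 0) \<in> N" using Suc.prems u(1)
      unfolding upclosed_def by blast
    then show "u \<in> Nj (Suc j)" using map2_plus_zero[of u] u(2) by (simp add: Nj_def)
  qed
  have mono: "i \<le> j \<Longrightarrow> Nj i \<subseteq> Nj j" for i j
    by (rule lift_Suc_mono_le[of Nj]) (use monoS in auto)
  obtain J where J: "\<And>j. j \<ge> J \<Longrightarrow> Nj j = Nj J" using stabilize[of k Nj, OF up mono] by blast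
  define h where "h = (\<lambda>j m. int (card (Ek k m - Nj j)))"
  define H where "H = (\<lambda>j. Abs_fps (h j))"
  have ratH: "ratF k (H j)" for j using Suc.IH[OF up[of j]] by (simp add: H_def h_def)
  have hJ: "j \<ge> J \<Longrightarrow> h j = h J" for j using J[of j] by (simp add: h_def)
  have eq: "Abs_fps (\<lambda>n. int (card (Ek (Suc k) n - N))) =
     (\<Sum>j<J. fps_X ^ j * H j) + fps_X ^ J * (H J * ones)"
  proof (rule fps_ext)
    fix n
    have L: "Abs_fps (\<lambda>n. int (card (Ek (Suc k) n - N))) $ n = (\<Sum>j\<le>n. h j (n - j))"
      by (simp add: card_Ek_Suc h_def Nj_def)
    have R1: "(\<Sum>j<J. fps_X ^ j * H j) $ n = (\<Sum>j\<in>{..<J} \<inter> {..n}. h j (n - j))"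
      by (simp add: fps_sum_nth fps_X_power_mult_nth H_def sum.If_cases Int_def not_less)
    have R2: "(fps_X ^ J * (H J * ones)) $ n = (if n < J then 0 else (\<Sum>i=0..n-J. h J i))"
    proof -
      have "(H J * ones) $ m = (\<Sum>i=0..m. h J i)" for m by (simp add: fps_mult_nth H_def ones_def)
      then show ?thesis by (simp only: fps_X_power_mult_nth)
    qed
    show "Abs_fps (\<lambda>n. int (card (Ek (Suc k) n - N))) $ n =
      ((\<Sum>j<J. fps_X ^ j * H j) + fps_X ^ J * (H J * ones)) $ n"
    proof (cases "n < J")
      case True
      then have "{..<J} \<inter> {..n} = {..n}" by auto
      then show ?thesis using L R1 R2 True by simp
    next
      case False
      have spl: "{..n} = ({..<J} \<inter> {..n}) \<union> {J..n}" using False by auto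
      have "(\<Sum>j\<le>n. h j (n - j)) = (\<Sum>j\<in>({..<J} \<inter> {..n}) \<union> {J..n}. h j (n - j))"
        by (rule sum.cong[OF spl refl])
      also have "\<dots> = (\<Sum>j\<in>{..<J} \<inter> {..n}. h j (n - j)) + (\<Sum>j\<in>{J..n}. h j (n - j))"
        by (rule sum.union_disjoint) (simp, simp, force)
      also have "(\<Sum>j\<in>{J..n}. h j (n - j)) = (\<Sum>j\<in>{J..n}. h J (n - j))"
        by (intro sum.cong refl) (metis atLeastAtMost_iff hJ)
      also have "\<dots> = (\<Sum>i=0..n-J. h J i)"
        by (rule sum.reindex_bij_witness[of _ "\<lambda>i. n - i" "\<lambda>j. n - j"]) (use False in auto)
      finally show ?thesis using L R1 R2 False by simp
    qed
  qed
  show ?case unfolding eq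
    by (intro ratF_add ratF_sum ratF_Xpow ratF_Suc ratF_ones ratH)
qed

lemma IG_0: "direct_sum_decomp G \<Longrightarrow> 0 \<in> int_grading G n"
  by (auto simp: int_grading_def dsd_0)

lemma sum_int_support:
  fixes c :: "int \<Rightarrow> 'a::comm_monoid_add"
  assumes neg: "\<And>n. n < 0 \<Longrightarrow> c n = 0"
  shows "{n. c n \<noteq> 0} = int ` {j. c (int j) \<noteq> 0}" "sum c {n. c n \<noteq> 0} = (\<Sum>j | c (int j) \<noteq> 0. c (int j))"
proof -
  show s: "{n. c n \<noteq> 0} = int ` {j. c (int j) \<noteq> 0}"
  proof (intro set_eqI iffI)
    fix n assume "n \<in> {n. c n \<noteq> 0}"
    then have "n \<ge> 0" "c n \<noteq> 0" using neg by (auto simp: not_less[symmetric])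
    then show "n \<in> int ` {j. c (int j) \<noteq> 0}" by (auto intro!: image_eqI[of _ _ "nat n"])
  qed auto
  show "sum c {n. c n \<noteq> 0} = (\<Sum>j | c (int j) \<noteq> 0. c (int j))"
    unfolding s by (simp add: sum.reindex)
qed

lemma dsd_int_grading:
  assumes D: "direct_sum_decomp G"
  shows "direct_sum_decomp (int_grading G)"
  unfolding direct_sum_decomp_def
proof (rule conjI, intro allI)
  fix n
  show "0 \<in> int_grading G n \<and> (\<forall>x\<in>int_grading G n. \<forall>y\<in>int_grading G n. x + y \<in> int_grading G n \<and> - x \<in> int_grading G n)"
    using D by (auto simp: int_grading_def dsd_0 dsd_add dsd_uminus)
next
  show "\<forall>x. \<exists>!c. finite {n. c n \<noteq> 0} \<and> (\<forall>n. c n \<in> int_grading G n) \<and> x = sum c {n. c n \<noteq> 0}"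
  proof
  fix x
  let ?P = "\<lambda>c. finite {n. c n \<noteq> 0} \<and> (\<forall>n. c n \<in> int_grading G n) \<and> x = sum c {n. c n \<noteq> 0}"
  obtain c A where cA: "finite A" "\<And>j. c j \<in> G j" "x = sum c A" using dsd_exists[OF D, of x] by blast
  define c' where "c' n = (if 0 \<le> n \<and> nat n \<in> A then c (nat n) else 0)" for n
  have neg': "n < 0 \<Longrightarrow> c' n = 0" for n by (simp add: c'_def)
  have c'I: "c' (int j) = (if j \<in> A then c j else 0)" for j by (simp add: c'_def)
  have fin: "finite {j. c' (int j) \<noteq> 0}" using cA(1) by (rule finite_subset[rotated]) (auto simp: c'I split: if_splits)
  have "?P c'"
  proof (intro conjI allI)
    show "finite {n. c' n \<noteq> 0}" using sum_int_support(1)[of c', OF neg'] fin by simp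
    show "c' n \<in> int_grading G n" for n using cA(2) D by (auto simp: c'_def int_grading_def dsd_0)
    have "sum c' {n. c' n \<noteq> 0} = (\<Sum>j | c' (int j) \<noteq> 0. c' (int j))" by (rule sum_int_support(2)[of c', OF neg'])
    also have "\<dots> = (\<Sum>j\<in>A. c' (int j))"
      by (rule sum.mono_neutral_left[OF cA(1)]) (auto simp: c'I split: if_splits)
    also have "\<dots> = x" using cA(3) by (simp add: c'I)
    finally show "x = sum c' {n. c' n \<noteq> 0}" by simp
  qed
  moreover have "c1 = c2" if "?P c1" "?P c2" for c1 c2
  proof -
    have neg: "n < 0 \<Longrightarrow> c1 n = 0" "n < 0 \<Longrightarrow> c2 n = 0" for n
      using that by (auto simp: int_grading_def dest!: spec[of _ n])
    have f1: "finite {j. c1 (int j) \<noteq> 0}" "finite {j. c2 (int j) \<noteq> 0}"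
      using that sum_int_support(1)[of c1] sum_int_support(1)[of c2] neg
      by (auto dest: finite_imageD simp: inj_on_def)
    have "(\<lambda>j. c1 (int j)) = (\<lambda>j. c2 (int j))"
    proof (rule dsd_unique[OF D f1])
      show "c1 (int j) \<in> G j" "c2 (int j) \<in> G j" for j using that by (auto simp: int_grading_def dest!: spec[of _ "int j"])
      show "(\<Sum>j | c1 (int j) \<noteq> 0. c1 (int j)) = (\<Sum>j | c2 (int j) \<noteq> 0. c2 (int j))"
        using that sum_int_support(2)[of c1] sum_int_support(2)[of c2] neg by metis
    qed auto
    then have "c1 n = c2 n" for n
      by (cases "n < 0") (auto simp: neg dest: fun_cong[of _ _ "nat n"])
    then show ?thesis by auto
  qed
  ultimately show "\<exists>!c. ?P c" by blast
  qed
qed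

context sga begin

lemma gm_R: "graded_module G (*) (int_grading G)"
  unfolding graded_module_def
proof (intro conjI allI impI)
  show "module ((*) :: 'r \<Rightarrow> 'r \<Rightarrow> 'r)" by (rule module_mult)
  show "direct_sum_decomp (int_grading G)" by (rule dsd_int_grading[OF dsdG])
  fix i n r x assume r: "r \<in> G i" and x: "x \<in> int_grading G n"
  show "r * x \<in> int_grading G (int i + n)"
  proof (cases "n \<ge> 0")
    case True
    then have "x \<in> G (nat n)" using x by (simp add: int_grading_def)
    then have "r * x \<in> G (i + nat n)" using G_mult[OF r] by blast
    moreover have "nat (int i + n) = i + nat n" using True by simp
    ultimately show ?thesis using True by (simp add: int_grading_def)
  next
    case False
    then have "x = 0" using x by (simp add: int_grading_def)
    then show ?thesis using IG_0[OF dsdG] by simp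
  qed
qed

lemma fg_R: "fin_gen_module ((*) :: 'r \<Rightarrow> 'r \<Rightarrow> 'r)"
  unfolding fin_gen_module_def
proof (intro exI conjI)
  interpret M: module "(*) :: 'r \<Rightarrow> 'r \<Rightarrow> 'r" by (rule module_mult)
  show "finite {1::'r}" by simp
  show "M.span {1} = UNIV"
  proof (intro set_eqI iffI)
    fix x :: 'r
    have "x * 1 \<in> M.span {1}" by (intro M.span_scale M.span_base) simp
    then show "x \<in> M.span {1}" by simp
  qed simp
qed

end

context sga begin

lemma graded_surj_image:
  fixes smul :: "'r \<Rightarrow> 'm::ab_group_add \<Rightarrow> 'm" and smulQ :: "'r \<Rightarrow> 'q::ab_group_add \<Rightarrow> 'q"
  assumes gm: "graded_module G smul MG" and gq: "graded_module G smulQ QG"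
    and pl: "R_linear smul smulQ \<pi>" and ps: "surj \<pi>" and pg: "\<forall>n. \<pi> ` MG n \<subseteq> QG n"
  shows "\<pi> ` MG n = QG n"
proof
  note gf = graded_module_facts[OF gm]
  note gqf = graded_module_facts[OF gq]
  have padd: "\<pi> (x + y) = \<pi> x + \<pi> y" for x y using pl unfolding R_linear_def by blast
  have pMG: "\<pi> ` MG j \<subseteq> QG (j + 0)" for j using pg by simp
  show "QG n \<subseteq> \<pi> ` MG n"
  proof
    fix q assume q: "q \<in> QG n"
    obtain x where "q = \<pi> x" using ps by (metis surjD)
    then obtain y where "y \<in> MG (n - 0)" "q = \<pi> y"
      using graded_preimage[OF gf(2) gqf(2) padd pMG q] by blast
    then show "q \<in> \<pi> ` MG n" by auto
  qed
qed (use pg in auto)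

lemma part2a:
  fixes smulQ :: "'r \<Rightarrow> 'q::ab_group_add \<Rightarrow> 'q" and QG :: "int \<Rightarrow> 'q set"
  assumes a1: "a \<in> G 1" and b1: "b \<in> G 1" and ez: "exact_zero_divisor_pair a b"
    and gq: "graded_module G smulQ QG"
    and pl: "R_linear (*) smulQ \<pi>" and ps: "surj \<pi>" and pg: "\<forall>n. \<pi> ` int_grading G n \<subseteq> QG n"
    and pk: "{x. \<pi> x = 0} = range ((*) a)"
  shows "hilbert_series iota (*) (int_grading G) = (1 + fls_X) * hilbert_series iota smulQ QG"
proof -
  note gqf = graded_module_facts[OF gq]
  interpret Q: module smulQ by (rule gqf(1))
  have ann_a: "{r. a * r = 0} = range ((*) b)" and ann_b: "{r. b * r = 0} = range ((*) a)"
    using ez unfolding exact_zero_divisor_pair_def by auto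
  have ab: "a * b = 0" using ann_a by (metis (mono_tags, lifting) mem_Collect_eq mult_1_right rangeI)
  have padd: "\<pi> (x + y) = \<pi> x + \<pi> y" for x y using pl unfolding R_linear_def by blast
  have pmul: "\<pi> (r * x) = smulQ r (\<pi> x)" for r x using pl unfolding R_linear_def by blast
  have pdiff: "\<pi> (x - y) = \<pi> x - \<pi> y" for x y using padd[of "x - y" y] by (simp add: algebra_simps)
  have key: "b * x = b * y" if "\<pi> x = \<pi> y" for x y
  proof -
    have "\<pi> (x - y) = 0" using that pdiff by simp
    then obtain r where "x - y = a * r" using pk by auto
    then have "b * (x - y) = (a * b) * r" by (simp add: algebra_simps)
    then show ?thesis using ab by (simp add: algebra_simps)
  qed
  define sel where "sel q = (SOME x. \<pi> x = q)" for q
  have psel: "\<pi> (sel q) = q" for q unfolding sel_def using ps by (metis (mono_tags) someI_ex surjD)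
  define \<psi> where "\<psi> q = b * sel q" for q
  have yl: "R_linear smulQ (*) \<psi>"
    unfolding R_linear_def
  proof (intro conjI allI)
    fix x y
    have "\<pi> (sel (x + y)) = \<pi> (sel x + sel y)" by (simp add: psel padd)
    then have "b * sel (x + y) = b * (sel x + sel y)" by (rule key)
    then show "\<psi> (x + y) = \<psi> x + \<psi> y" unfolding \<psi>_def by (simp add: distrib_left)
  next
    fix r x
    have "\<pi> (sel (smulQ r x)) = \<pi> (r * sel x)" by (simp add: psel pmul)
    then have "b * sel (smulQ r x) = b * (r * sel x)" by (rule key)
    then show "\<psi> (smulQ r x) = r * \<psi> x" unfolding \<psi>_def by (simp add: algebra_simps)
  qed
  have yi: "inj \<psi>"
  proof (rule injI)
    fix x y assume "\<psi> x = \<psi> y"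
    then have "b * (sel x - sel y) = 0" by (simp add: \<psi>_def algebra_simps)
    then have "sel x - sel y \<in> range ((*) a)" using ann_b by blast
    then have "\<pi> (sel x - sel y) = 0" using pk by blast
    then show "x = y" by (simp add: pdiff psel)
  qed
  have yr: "range \<psi> = {x. a * x = 0}"
  proof (intro set_eqI iffI)
    fix x assume "x \<in> range \<psi>"
    then show "x \<in> {x. a * x = 0}" using ab by (auto simp: \<psi>_def mult.assoc[symmetric])
  next
    fix x assume "x \<in> {x. a * x = 0}"
    then obtain r where r: "x = b * r" using ann_a by blast
    have "\<psi> (\<pi> r) = b * r" unfolding \<psi>_def using key psel by metis
    then show "x \<in> range \<psi>" using r by (metis rangeI)
  qed
  have piIG: "\<pi> ` int_grading G n = QG n" for n
    by (rule graded_surj_image[OF gm_R gq pl ps pg])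
  have yg: "\<forall>n. \<psi> ` QG n \<subseteq> int_grading G (n + 1)"
  proof (intro allI subsetI)
    fix n z assume "z \<in> \<psi> ` QG n"
    then obtain q where q: "q \<in> QG n" "z = \<psi> q" by auto
    then obtain y where y: "y \<in> int_grading G n" "q = \<pi> y" using piIG[of n] by blast
    have z: "z = b * y" unfolding q(2) \<psi>_def using key psel y(2) by metis
    show "z \<in> int_grading G (n + 1)"
    proof (cases "n \<ge> 0")
      case True
      then have "y \<in> G (nat n)" using y by (simp add: int_grading_def)
      then have "b * y \<in> G (1 + nat n)" using G_mult[OF b1] by blast
      moreover have "nat (n + 1) = 1 + nat n" using True by simp
      ultimately show ?thesis using True z by (simp add: int_grading_def)
    next
      case False
      then have "y = 0" using y by (simp add: int_grading_def)
      then show ?thesis using z IG_0[OF dsdG] by simp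
    qed
  qed
  show ?thesis
    by (rule part1[OF a1 gm_R fg_R gq pl ps pg pk yl yi yr yg])
qed

end

lemma sum_list_map2: "length u = length w \<Longrightarrow> sum_list (map2 (+) u w) = sum_list u + sum_list (w::nat list)"
proof (induction u arbitrary: w)
  case (Cons a u)
  then obtain b w' where "w = b # w'" by (cases w) auto
  with Cons show ?case by simp
qed simp

lemma lex_add:
  "length u = length w \<Longrightarrow> length v = length w \<Longrightarrow> u < v \<Longrightarrow> map2 (+) u w < map2 (+) v (w :: nat list)"
proof (induction w arbitrary: u v)
  case Nil then show ?case by simp
next
  case (Cons x w)
  then obtain a u' b v' where "u = a # u'" "v = b # v'" by (auto simp: length_Suc_conv)
  with Cons show ?case by auto
qed

context sga begin

definition NSt :: "('r \<Rightarrow> 'q::ab_group_add \<Rightarrow> 'q) \<Rightarrow> (nat list \<Rightarrow> 'q) \<Rightarrow> nat list set" where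
  "NSt smulQ e = {u. length u = d \<and> e u \<in> module.span (ks smulQ) (e ` {v \<in> E (sum_list u). v < u})}"

lemma NS_up:
  fixes smulQ :: "'r \<Rightarrow> 'q::ab_group_add \<Rightarrow> 'q"
  assumes Q: "module smulQ"
    and e: "\<And>u w. length u = d \<Longrightarrow> length w = d \<Longrightarrow> e (map2 (+) u w) = smulQ (mon w) (e u)"
  shows "upclosed d (NSt smulQ e)"
  unfolding upclosed_def
proof (intro conjI ballI allI impI)
  interpret M: module smulQ by fact
  interpret V: vector_space "ks smulQ" using vs_ks[OF Q] .
  fix u w :: "nat list" assume u: "u \<in> NSt smulQ e" and w: "length w = d"
  let ?h = "smulQ (mon w)"
  have lin: "Vector_Spaces.linear (ks smulQ) (ks smulQ) ?h"
    by (rule lin_ks[OF Q Q]) (simp add: R_linear_def M.scale_right_distrib M.scale_scale mult.commute)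
  interpret H: Vector_Spaces.linear "ks smulQ" "ks smulQ" ?h by (rule lin)
  have lu: "length u = d" and eu: "e u \<in> V.span (e ` {v \<in> E (sum_list u). v < u})"
    using u by (auto simp: NSt_def)
  have "e (map2 (+) u w) = ?h (e u)" by (rule e[OF lu w])
  also have "\<dots> \<in> ?h ` V.span (e ` {v \<in> E (sum_list u). v < u})" using eu by blast
  also have "\<dots> = V.span (?h ` e ` {v \<in> E (sum_list u). v < u})" by (simp add: H.span_image)
  also have "\<dots> \<subseteq> V.span (e ` {v \<in> E (sum_list (map2 (+) u w)). v < map2 (+) u w})"
  proof (rule V.span_mono, rule subsetI)
    fix z assume "z \<in> ?h ` e ` {v \<in> E (sum_list u). v < u}"
    then obtain v where v: "v \<in> E (sum_list u)" "v < u" "z = ?h (e v)" by auto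
    have lv: "length v = d" using v(1) by (simp add: E_def)
    have "z = e (map2 (+) v w)" using e[OF lv w] v(3) by simp
    moreover have "map2 (+) v w \<in> E (sum_list (map2 (+) u w))"
      using v(1) lu lv w by (simp add: E_def sum_list_map2)
    moreover have "map2 (+) v w < map2 (+) u w" using lex_add[of v w u] lu lv w v(2) by simp
    ultimately show "z \<in> e ` {v \<in> E (sum_list (map2 (+) u w)). v < map2 (+) u w}" by blast
  qed
  finally show "map2 (+) u w \<in> NSt smulQ e" using lu w by (simp add: NSt_def)
qed (simp add: NSt_def)

lemma std_dim:
  fixes smulQ :: "'r \<Rightarrow> 'q::ab_group_add \<Rightarrow> 'q"
  assumes Q: "module smulQ"
  shows "vector_space.dim (ks smulQ) (module.span (ks smulQ) (e ` E n)) = card (E n - NSt smulQ e)"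
proof -
  interpret V: vector_space "ks smulQ" using vs_ks[OF Q] .
  define S where "S = E n - NSt smulQ e"
  define B where "B = e ` S"
  have lt_E: "{v \<in> E (sum_list u). v < u} = {v \<in> E n. v < u}" if "u \<in> E n" for u
    using that by (simp add: E_def)
  have std: "e u \<notin> V.span (e ` {v \<in> E n. v < u})" if "u \<in> S" for u
    using that lt_E[of u] by (auto simp: S_def NSt_def E_def)
  have spanB: "e u \<in> V.span B" if "u \<in> E n" for u
    using that
  proof (induction u rule: measure_induct_rule[of "\<lambda>u. card {v \<in> E n. v < u}"])
    case (less u)
    show ?case
    proof (cases "u \<in> S")
      case True then show ?thesis by (auto simp: B_def intro: V.span_base)
    next
      case False
      then have "e u \<in> V.span (e ` {v \<in> E n. v < u})"
        using less.prems lt_E[OF less.prems] by (auto simp: S_def NSt_def E_def)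
      moreover have "e ` {v \<in> E n. v < u} \<subseteq> V.span B"
      proof
        fix z assume "z \<in> e ` {v \<in> E n. v < u}"
        then obtain v where v: "v \<in> E n" "v < u" "z = e v" by auto
        have "{w \<in> E n. w < v} \<subset> {w \<in> E n. w < u}" using v less.prems by auto
        then have "card {w \<in> E n. w < v} < card {w \<in> E n. w < u}"
          by (rule psubset_card_mono[rotated]) (simp add: finite_E)
        then show "z \<in> V.span B" using less.IH v by blast
      qed
      ultimately show ?thesis using V.span_mono[of _ "V.span B"] V.span_span by blast
    qed
  qed
  have inj: "inj_on e S"
  proof (rule inj_onI)
    fix u v assume uv: "u \<in> S" "v \<in> S" "e u = e v"
    show "u = v"
    proof (rule ccontr)
      assume "u \<noteq> v"
      then consider "v < u" | "u < v" by (meson neqE)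
      then show False
      proof cases
        case 1
        then have "e u \<in> V.span (e ` {w \<in> E n. w < u})" using uv by (auto simp: S_def intro!: V.span_base)
        then show False using std[OF uv(1)] by simp
      next
        case 2
        then have "e v \<in> e ` {w \<in> E n. w < v}" using uv by (auto simp: S_def intro!: image_eqI[of _ _ u])
        then have "e v \<in> V.span (e ` {w \<in> E n. w < v})" by (rule V.span_base)
        then show False using std[OF uv(2)] by simp
      qed
    qed
  qed
  have finS: "finite S" using finite_E by (simp add: S_def)
  have indep: "A \<subseteq> S \<longrightarrow> V.independent (e ` A)" if "finite A" for A
    using that
  proof (induction A rule: finite_linorder_max_induct)
    case empty then show ?case by (simp add: V.independent_empty)
  next
    case (insert b A)
    show ?case
    proof
      assume sub: "insert b A \<subseteq> S"
      then have "e ` A \<subseteq> e ` {v \<in> E n. v < b}" using insert.hyps by (auto simp: S_def)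
      then have "e b \<notin> V.span (e ` A)" using std[of b] sub V.span_mono by blast
      then show "V.independent (e ` insert b A)"
        using insert.IH sub V.independent_insertI by auto
    qed
  qed
  have indB: "V.independent B" unfolding B_def using indep[OF finS] by simp
  have "V.span (e ` E n) = V.span B"
  proof (rule V.span_subspace[symmetric, THEN trans])
    show "B \<subseteq> V.span (e ` E n)" by (auto simp: B_def S_def intro: V.span_base)
    show "V.span (e ` E n) \<subseteq> V.span B"
      using spanB by (intro V.span_minimal) auto
    show "V.subspace (V.span (e ` E n))" by simp
  qed simp
  then have "V.dim (V.span (e ` E n)) = card B" using V.dim_span_eq_card_independent[OF indB] by simp
  also have "\<dots> = card S" unfolding B_def using inj by (rule card_image)
  finally show ?thesis by (simp add: S_def)
qed

end

context sga begin

lemma span_one_R: "module.span ((*) :: 'r \<Rightarrow> 'r \<Rightarrow> 'r) {1} = UNIV"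
proof -
  interpret M: module "(*) :: 'r \<Rightarrow> 'r \<Rightarrow> 'r" by (rule module_mult)
  show ?thesis
  proof (intro set_eqI iffI)
    fix x :: 'r
    have "x * 1 \<in> M.span {1}" by (intro M.span_scale M.span_base) simp
    then show "x \<in> M.span {1}" by simp
  qed simp
qed

lemma part2b:
  fixes smulQ :: "'r \<Rightarrow> 'q::ab_group_add \<Rightarrow> 'q" and QG :: "int \<Rightarrow> 'q set"
  assumes gq: "graded_module G smulQ QG"
    and pl: "R_linear (*) smulQ \<pi>" and ps: "surj \<pi>" and pg: "\<forall>n. \<pi> ` int_grading G n \<subseteq> QG n"
  shows "\<exists>p::int poly. hilbert_series iota smulQ QG * (1 - fls_X) ^ d = fps_to_fls (fps_of_poly p)"
proof -
  note gqf = graded_module_facts[OF gq]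
  interpret Q: module smulQ by (rule gqf(1))
  interpret VQ: vector_space "ks smulQ" using vs_ks[OF gqf(1)] .
  have linP: "Vector_Spaces.linear (ks (*)) (ks smulQ) \<pi>" by (rule lin_ks[OF module_mult gqf(1) pl])
  interpret P: Vector_Spaces.linear "ks (*)" "ks smulQ" \<pi> by (rule linP)
  have pmul: "\<pi> (r * x) = smulQ r (\<pi> x)" for r x using pl unfolding R_linear_def by blast
  define e where "e u = \<pi> (mon u)" for u
  have e_add: "e (map2 (+) u w) = smulQ (mon w) (e u)" if "length u = d" "length w = d" for u w
    unfolding e_def mon_add[OF that] using pmul[of "mon w" "mon u"] by (simp add: mult.commute)
  define NS where "NS = NSt smulQ e"
  have up: "upclosed d NS" unfolding NS_def by (rule NS_up[OF gqf(1) e_add])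
  have piIG: "\<pi> ` int_grading G n = QG n" for n by (rule graded_surj_image[OF gm_R gq pl ps pg])
  have subQ: "VQ.subspace (QG n)" for n by (rule subspace_MG[OF gq])
  define T where "T = {(0::int, 1::'r)}"
  have T: "finite T" "\<And>j m. (j, m) \<in> T \<Longrightarrow> m \<in> int_grading G j" "module.span (*) (snd ` T) = UNIV"
    using one_in_G0 span_one_R by (auto simp: T_def int_grading_def)
  have QGn: "QG n = VQ.span (e ` E (nat n))" if n: "n \<ge> 0" for n
  proof
    have "int_grading G n \<subseteq> module.span (ks (*)) (Zn (*) T n)" by (rule module_fin[OF gm_R T])
    then have "QG n \<subseteq> \<pi> ` module.span (ks (*)) (Zn (*) T n)" using piIG[of n] by (metis image_mono)
    also have "\<dots> = VQ.span (\<pi> ` Zn (*) T n)" by (simp add: P.span_image)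
    also have "\<dots> \<subseteq> VQ.span (e ` E (nat n))"
      by (rule VQ.span_mono) (auto simp: Zn_def T_def e_def)
    finally show "QG n \<subseteq> VQ.span (e ` E (nat n))" .
    have "e ` E (nat n) \<subseteq> QG n"
    proof
      fix z assume "z \<in> e ` E (nat n)"
      then obtain u where u: "u \<in> E (nat n)" "z = e u" by auto
      have "mon u \<in> int_grading G n" using mon_in_G[of u] u(1) n by (simp add: E_def int_grading_def)
      then show "z \<in> QG n" using u(2) piIG[of n] by (auto simp: e_def)
    qed
    then show "VQ.span (e ` E (nat n)) \<subseteq> QG n" by (rule VQ.span_minimal[OF _ subQ])
  qed
  have QGneg: "QG n = {0}" if "n < 0" for n
    using piIG[of n] that P.zero by (simp add: int_grading_def)
  define F where "F = Abs_fps (\<lambda>k. int (card (E k - NS)))"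
  have rank: "int (graded_rank iota smulQ QG n) = (if n < 0 then 0 else F $ nat n)" for n
  proof (cases "n < 0")
    case True then show ?thesis using QGneg[OF True] dim_zero_sp[OF VQ.vector_space_axioms]
      by (simp add: graded_rank_def)
  next
    case False
    then show ?thesis using QGn[of n] std_dim[OF gqf(1), of e "nat n"]
      by (simp add: graded_rank_def F_def NS_def)
  qed
  have HQ: "hilbert_series iota smulQ QG = fps_to_fls F"
  proof (rule fls_eqI)
    fix n
    have "fls_nth (hilbert_series iota smulQ QG) n = int (graded_rank iota smulQ QG n)"
      unfolding hilbert_series_def by (rule nth_Abs_fls_lower_bound[of 0]) (use rank in simp)
    then show "fls_nth (hilbert_series iota smulQ QG) n = fls_nth (fps_to_fls F) n"
      using rank[of n] by simp
  qed
  have "E = Ek d" by (auto simp: E_def Ek_def fun_eq_iff)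
  then have "ratF d F" unfolding F_def using count_main[OF up] by simp
  then obtain p where p: "F * (1 - fps_X) ^ d = fps_of_poly p" by (auto simp: ratF_def)
  have "hilbert_series iota smulQ QG * (1 - fls_X) ^ d = fps_to_fls (F * (1 - fps_X) ^ d)"
    by (simp add: HQ fls_times_fps_to_fls fps_to_fls_power)
  then show ?thesis using p by auto
qed

lemma part2:
  fixes smulQ :: "'r \<Rightarrow> 'q::ab_group_add \<Rightarrow> 'q" and QG :: "int \<Rightarrow> 'q set"
  assumes a1: "a \<in> G 1" and b1: "b \<in> G 1" and ez: "exact_zero_divisor_pair a b"
    and gq: "graded_module G smulQ QG"
    and pl: "R_linear (*) smulQ \<pi>" and ps: "surj \<pi>" and pg: "\<forall>n. \<pi> ` int_grading G n \<subseteq> QG n"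
    and pk: "{x. \<pi> x = 0} = range ((*) a)"
  shows "hilbert_series iota (*) (int_grading G) = (1 + fls_X) * hilbert_series iota smulQ QG \<and>
         (\<exists>(p :: int poly) (d :: nat).
            hilbert_series iota (*) (int_grading G) * (1 - fls_X) ^ d = fps_to_fls (fps_of_poly p) \<and>
            poly p (-1) = 0)"
proof
  have H: "hilbert_series iota (*) (int_grading G) = (1 + fls_X) * hilbert_series iota smulQ QG"
    by (rule part2a[OF a1 b1 ez gq pl ps pg pk])
  then show "hilbert_series iota (*) (int_grading G) = (1 + fls_X) * hilbert_series iota smulQ QG" .
  obtain p where p: "hilbert_series iota smulQ QG * (1 - fls_X) ^ d = fps_to_fls (fps_of_poly p)"
    using part2b[OF gq pl ps pg] by blast
  have lin: "fps_of_poly [:1, 1:] = (1 + fps_X :: int fps)"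
    by (rule fps_ext) (auto simp: coeff_pCons split: nat.splits)
  have "hilbert_series iota (*) (int_grading G) * (1 - fls_X) ^ d
      = (1 + fls_X) * (hilbert_series iota smulQ QG * (1 - fls_X) ^ d)"
    by (simp add: H mult.assoc)
  also have "\<dots> = fps_to_fls (fps_of_poly ([:1, 1:] * p))"
  proof -
    have l2: "fps_to_fls (fps_of_poly ([:1, 1:] * p)) = (1 + fls_X) * fps_to_fls (fps_of_poly p)"
      by (simp only: fps_of_poly_mult lin fls_times_fps_to_fls fps_to_fls_plus fps_one_to_fls fps_X_to_fls)
    show ?thesis by (simp only: p l2)
  qed
  finally show "\<exists>(p :: int poly) (d :: nat).
            hilbert_series iota (*) (int_grading G) * (1 - fls_X) ^ d = fps_to_fls (fps_of_poly p) \<and>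
            poly p (-1) = 0"
    by (intro exI[of _ "[:1, 1:] * p"] exI[of _ d]) simp
qed

end

theorem lemma2p1:
  fixes iota :: "'k::field \<Rightarrow> 'r::comm_ring_1"
    and G :: "nat \<Rightarrow> 'r set"
    and a :: 'r
  assumes R: "standard_graded_algebra iota G"
    and a1: "a \<in> G 1"
  shows
   "(\<forall>(smul :: 'r \<Rightarrow> 'm::ab_group_add \<Rightarrow> 'm) MG (smulQ :: 'r \<Rightarrow> 'q::ab_group_add \<Rightarrow> 'q) QG \<pi> \<psi>.
       graded_module G smul MG \<and> fin_gen_module smul \<and>
       \<comment> \<open>Q with \<pi> is the graded quotient module M/aM\<close>
       graded_module G smulQ QG \<and>
       R_linear smul smulQ \<pi> \<and> surj \<pi> \<and> (\<forall>n. \<pi> ` MG n \<subseteq> QG n) \<and>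
       {x. \<pi> x = 0} = range (smul a) \<and>
       \<comment> \<open>\<psi> is a graded isomorphism (M/aM)(-1) \<cong> (0 :_M a)\<close>
       R_linear smulQ smul \<psi> \<and> inj \<psi> \<and> range \<psi> = {x. smul a x = 0} \<and>
       (\<forall>n. \<psi> ` QG n \<subseteq> MG (n + 1))
     \<longrightarrow> hilbert_series iota smul MG = (1 + fls_X) * hilbert_series iota smulQ QG)
    \<and>
    (\<forall>b (smulQ :: 'r \<Rightarrow> 'q2::ab_group_add \<Rightarrow> 'q2) QG \<pi>.
       b \<in> G 1 \<and> exact_zero_divisor_pair a b \<and>
       \<comment> \<open>Q with \<pi> is the graded quotient module R/aR\<close>
       graded_module G smulQ QG \<and>
       R_linear (*) smulQ \<pi> \<and> surj \<pi> \<and> (\<forall>n. \<pi> ` int_grading G n \<subseteq> QG n) \<and>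
       {x. \<pi> x = 0} = range ((*) a)
     \<longrightarrow> hilbert_series iota (*) (int_grading G) = (1 + fls_X) * hilbert_series iota smulQ QG \<and>
         (\<exists>(p :: int poly) (d :: nat).
            hilbert_series iota (*) (int_grading G) * (1 - fls_X) ^ d = fps_to_fls (fps_of_poly p) \<and>
            poly p (-1) = 0))"
proof -
  from R obtain B where B: "finite B" "B \<subseteq> G 1" "alg_gen iota B = UNIV"
    unfolding standard_graded_algebra_def by blast
  obtain xs where xs: "set xs = B" using finite_list[OF B(1)] by blast
  interpret S: sga iota G xs by unfold_locales (use R B xs in auto)
  show ?thesis
    apply (rule conjI)
     apply (intro allI impI)
     apply (elim conjE, rule S.part1[OF a1], assumption+)
    apply (intro allI impI)
    apply (elim conjE, rule S.part2[OF a1], assumption+)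
    done
qed

end
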